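(* Let $\mathsf{A}=(A_1,A_2,A_3)\in GL_2(\mathbb{R})^3$ be such that $A_3=cI$ for some $c\in\mathbb{R}\setminus\{0\}$ and $(A_1,A_2)$ is irreducible and dominated. Then for every H\"older continuous potential $f:\{1,2,3\}^{\mathbb{N}}\to\mathbb{R}$ and every $C>0$ there exist $\mathtt{i}\in\{1,2,3\}^{\mathbb{N}}$ and $n\in\mathbb{N}$ such that $\bigl|\sum_{k=0}^{n-1}f(\sigma^k\mathtt{i})-\log\|A_{\mathtt{i}|_n}\|\bigr|>C$.
   Context: $\|\cdot\|$ is the operator norm. $\sigma$ is the left shift on $\{1,2,3\}^{\mathbb{N}}$, $\mathtt{i}|_n$ the first $n$ symbols of $\mathtt{i}$, $\mathtt{i}\wedge\mathtt{j}$ the longest common prefix, $A_{i_1\cdots i_n}=A_{i_1}\cdots A_{i_n}$. A potential $f$ is H\"older continuous if $|f(\mathtt{i})-f(\mathtt{j})|\le K\tau^{|\mathtt{i}\wedge\mathtt{j}|}$ for some $K>0$, $0<\tau<1$. $(A_1,A_2)$ is irreducible if no 1-dimensional subspace is invariant under both $A_1$ and $A_2$; it is dominated if there exist $K>0$ and $0<\tau<1$ with $|\det(B_1\cdots B_n)|/\|B_1\cdots B_n\|^2\le K\tau^n$ for all $n$ and all $B_1,\dots,B_n\in\{A_1,A_2\}$. *)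

theory Defs
  imports "HOL-Analysis.Analysis"
begin

definition Sigma3 :: "(nat \<Rightarrow> nat) set" where
  "Sigma3 = {i. \<forall>k. i k \<in> {1,2,3}}"

definition shiftk :: "nat \<Rightarrow> (nat \<Rightarrow> nat) \<Rightarrow> (nat \<Rightarrow> nat)" where
  "shiftk k i = (\<lambda>m. i (m + k))"

definition mprod :: "(nat \<Rightarrow> real^2^2) \<Rightarrow> nat \<Rightarrow> real^2^2" where
  "mprod B n = foldr (\<lambda>k M. B k ** M) [0..<n] (mat 1)"

definition opnorm :: "real^2^2 \<Rightarrow> real" where
  "opnorm M = onorm (\<lambda>x. M *v x)"

definition word_prod :: "(nat \<Rightarrow> real^2^2) \<Rightarrow> (nat \<Rightarrow> nat) \<Rightarrow> nat \<Rightarrow> real^2^2" where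
  "word_prod A i n = mprod (\<lambda>k. A (i k)) n"

text \<open>Hoelder continuity: |f i - f j| \<le> K tau^{|i \<and> j|}, written as: whenever i and j
  agree on the first n symbols, |f i - f j| \<le> K tau^n (equivalent since tau^n decreases).\<close>
definition holder_potential :: "((nat \<Rightarrow> nat) \<Rightarrow> real) \<Rightarrow> bool" where
  "holder_potential f \<longleftrightarrow> (\<exists>K>0. \<exists>\<tau>. 0 < \<tau> \<and> \<tau> < 1 \<and>
     (\<forall>i\<in>Sigma3. \<forall>j\<in>Sigma3. \<forall>n. (\<forall>k<n. i k = j k) \<longrightarrow> \<bar>f i - f j\<bar> \<le> K * \<tau> ^ n))"

definition irreducible_pair :: "real^2^2 \<Rightarrow> real^2^2 \<Rightarrow> bool" where
  "irreducible_pair A1 A2 \<longleftrightarrow>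
     \<not> (\<exists>v::real^2. v \<noteq> 0 \<and> A1 *v v \<in> span {v} \<and> A2 *v v \<in> span {v})"

definition dominated_pair :: "real^2^2 \<Rightarrow> real^2^2 \<Rightarrow> bool" where
  "dominated_pair A1 A2 \<longleftrightarrow> (\<exists>K>0. \<exists>\<tau>. 0 < \<tau> \<and> \<tau> < 1 \<and>
     (\<forall>n\<ge>1. \<forall>B. (\<forall>k<n. B k \<in> {A1, A2}) \<longrightarrow>
        \<bar>det (mprod B n)\<bar> / (opnorm (mprod B n))^2 \<le> K * \<tau> ^ n))"

end

theory Submission
  imports Defs
begin


definition tr2 :: "real^2^2 \<Rightarrow> real" where "tr2 M = M$1$1 + M$2$2"

fun mp :: "real^2^2 \<Rightarrow> nat \<Rightarrow> real^2^2" where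
  "mp M 0 = mat 1" | "mp M (Suc j) = M ** mp M j"

fun pp :: "real \<Rightarrow> real \<Rightarrow> nat \<Rightarrow> real" where
  "pp t d 0 = 0" | "pp t d (Suc 0) = 1"
| "pp t d (Suc (Suc j)) = t * pp t d (Suc j) - d * pp t d j"

lemma mat2_eq: "(M::real^2^2) = N \<longleftrightarrow>
   M$1$1 = N$1$1 \<and> M$1$2 = N$1$2 \<and> M$2$1 = N$2$1 \<and> M$2$2 = N$2$2"
  by (auto simp: vec_eq_iff forall_2)

lemma mult2: "((M::real^2^2) ** N)$i$j = M$i$1 * N$1$j + M$i$2 * N$2$j"
  by (simp add: matrix_matrix_mult_def sum_2)

lemma CH_gen: "(M::real^2^2) ** (M ** (X::real^2^2)) = tr2 M *\<^sub>R (M ** X) - det M *\<^sub>R X"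
  by (rule iffD2[OF mat2_eq]) (simp add: mult2 det_2 tr2_def algebra_simps)

lemma mp_rec: "mp M (Suc (Suc j)) = tr2 M *\<^sub>R mp M (Suc j) - det M *\<^sub>R mp M j"
  using CH_gen[of M "mp M j"] by simp

lemma mp_pp: "mp M (Suc j) = pp (tr2 M) (det M) (Suc j) *\<^sub>R M - (det M * pp (tr2 M) (det M) j) *\<^sub>R mat 1"
proof (induction j)
  case 0
  then show ?case by simp
next
  case (Suc j)
  have "mp M (Suc (Suc j)) = M ** mp M (Suc j)" by simp
  also have "\<dots> = M ** (pp (tr2 M) (det M) (Suc j) *\<^sub>R M - (det M * pp (tr2 M) (det M) j) *\<^sub>R mat 1)"
    using Suc by simp
  finally show ?case
    unfolding mat2_eq by (simp add: mult2 det_2 tr2_def mat_def algebra_simps)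
qed

lemma mp_entry: "(mp M (Suc j))$a$b = pp (tr2 M) (det M) (Suc j) * M$a$b
   - det M * pp (tr2 M) (det M) j * (if a = b then 1 else 0)"
  by (subst mp_pp) (simp add: mat_def)

lemma opnorm_entry_sum: "opnorm M \<le> \<bar>M$1$1\<bar> + \<bar>M$1$2\<bar> + \<bar>M$2$1\<bar> + \<bar>M$2$2\<bar>"
  using onorm_le_matrix_component_sum[of M] by (simp add: opnorm_def sum_2)

lemma entry_le_opnorm: "\<bar>M$i$j\<bar> \<le> opnorm M"
  using matrix_component_le_onorm[of M i j] by (simp add: opnorm_def)

lemma tr2_le: "\<bar>tr2 M\<bar> \<le> 2 * opnorm M"
  using entry_le_opnorm[of M 1 1] entry_le_opnorm[of M 2 2] by (simp add: tr2_def)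

lemma pp_to_zero:
  assumes lo: "0 < lo" and bnd: "\<forall>j. lo \<le> opnorm (mp M j)"
    and p0: "pp (tr2 M) (det M) \<longlonglongrightarrow> 0"
  shows False
proof -
  let ?p = "pp (tr2 M) (det M)"
  have p1: "(\<lambda>j. ?p (Suc j)) \<longlonglongrightarrow> 0" using p0 by (simp add: LIMSEQ_Suc)
  define e where "e j = \<bar>?p (Suc j) * M$1$1 - det M * ?p j\<bar> + \<bar>?p (Suc j) * M$1$2\<bar>
     + \<bar>?p (Suc j) * M$2$1\<bar> + \<bar>?p (Suc j) * M$2$2 - det M * ?p j\<bar>" for j
  have "e \<longlonglongrightarrow> \<bar>0 * M$1$1 - det M * 0\<bar> + \<bar>0 * M$1$2\<bar> + \<bar>0 * M$2$1\<bar> + \<bar>0 * M$2$2 - det M * 0\<bar>"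
    unfolding e_def by (intro tendsto_intros p0 p1)
  hence e0: "e \<longlonglongrightarrow> 0" by simp
  have le: "opnorm (mp M (Suc j)) \<le> e j" for j
    using opnorm_entry_sum[of "mp M (Suc j)"] unfolding mp_entry e_def by simp
  from order_tendstoD(2)[OF e0 lo] obtain N where "\<And>j. j \<ge> N \<Longrightarrow> e j < lo"
    by (auto simp: eventually_sequentially)
  hence "e N < lo" by simp
  moreover have "lo \<le> e N" using bnd le[of N] by (meson order_trans)
  ultimately show False by simp
qed

lemma pp_root: assumes "a + b = t" "a * b = d"
  shows "pp t d (Suc j) - a * pp t d j = b ^ j"
proof (induction j)
  case 0 then show ?case by simp
next
  case (Suc j)
  have "pp t d (Suc (Suc j)) - a * pp t d (Suc j) = b * (pp t d (Suc j) - a * pp t d j)"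
    using assms[symmetric] by (simp add: algebra_simps)
  then show ?case using Suc by simp
qed

lemma pp_double: assumes "a + a = t" "a * a = d"
  shows "pp t d (Suc j) = real (Suc j) * a ^ j"
proof (induction j)
  case 0 then show ?case by simp
next
  case (Suc j)
  have "pp t d (Suc (Suc j)) = a * pp t d (Suc j) + a ^ (Suc j)"
    using pp_root[OF assms, of "Suc j"] by simp
  then show ?case using Suc by (simp add: algebra_simps)
qed

lemma pp_small_roots: assumes "a + b = t" "a * b = d" "\<bar>a\<bar> < 1" "\<bar>b\<bar> < 1"
  shows "pp t d \<longlonglongrightarrow> 0"
proof (cases "a = b")
  case True
  have "(\<lambda>j. of_nat j * a ^ j + a ^ j) \<longlonglongrightarrow> 0 + 0"
    using assms(3) by (intro tendsto_intros powser_times_n_limit_0) auto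
  moreover have "pp t d (Suc j) = of_nat j * a ^ j + a ^ j" for j
    using pp_double[of a t d j] assms True by (simp add: algebra_simps)
  ultimately have "(\<lambda>j. pp t d (Suc j)) \<longlonglongrightarrow> 0" by simp
  then show ?thesis by (rule LIMSEQ_imp_Suc)
next
  case False
  have eq: "pp t d j = (b ^ j - a ^ j) / (b - a)" for j
  proof -
    have "pp t d (Suc j) - a * pp t d j = b ^ j" by (rule pp_root[OF assms(1,2)])
    moreover have "pp t d (Suc j) - b * pp t d j = a ^ j"
      by (rule pp_root) (use assms in \<open>auto simp: algebra_simps\<close>)
    ultimately have "(b - a) * pp t d j = b ^ j - a ^ j" by (simp add: algebra_simps)
    then show ?thesis using False by (simp add: field_simps)
  qed
  have "(\<lambda>j. (b ^ j - a ^ j) / (b - a)) \<longlonglongrightarrow> (0 - 0) / (b - a)"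
    using assms(3,4) False by (intro tendsto_intros LIMSEQ_abs_realpow_zero2) auto
  then show ?thesis by (simp add: eq[abs_def])
qed

lemma pp_energy: "pp t d (Suc j) ^ 2 - t * pp t d (Suc j) * pp t d j + d * pp t d j ^ 2 = d ^ j"
proof (induction j)
  case 0 then show ?case by simp
next
  case (Suc j)
  have "pp t d (Suc (Suc j)) ^ 2 - t * pp t d (Suc (Suc j)) * pp t d (Suc j) + d * pp t d (Suc j) ^ 2
     = d * (pp t d (Suc j) ^ 2 - t * pp t d (Suc j) * pp t d j + d * pp t d j ^ 2)"
    by (simp add: power2_eq_square algebra_simps)
  then show ?case using Suc by simp
qed

lemma pp_complex: assumes "t^2 < 4 * d" "d < 1"
  shows "pp t d \<longlonglongrightarrow> 0"
proof -
  define \<delta> where "\<delta> = d - t^2/4"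
  have dp: "\<delta> > 0" using assms by (simp add: \<delta>_def)
  have d0: "d > 0" using assms(1) by (smt (verit) zero_le_power2)
  have le: "norm (pp t d j) \<le> sqrt (d ^ j / \<delta>)" for j
  proof -
    have "\<delta> * pp t d j ^ 2 \<le> (pp t d (Suc j) - t * pp t d j / 2)^2 + \<delta> * pp t d j ^ 2" by simp
    also have "\<dots> = d ^ j" using pp_energy[of t d j]
      by (simp add: \<delta>_def power2_eq_square algebra_simps)
    finally have "pp t d j ^ 2 \<le> d ^ j / \<delta>" using dp by (simp add: field_simps)
    then have "sqrt (pp t d j ^ 2) \<le> sqrt (d ^ j / \<delta>)" by (rule real_sqrt_le_mono)
    then show ?thesis by simp
  qed
  have "(\<lambda>j. sqrt (d ^ j / \<delta>)) \<longlonglongrightarrow> sqrt (0 / \<delta>)"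
    using d0 assms(2) dp by (intro tendsto_intros LIMSEQ_realpow_zero) auto
  then have "(\<lambda>j. sqrt (d ^ j / \<delta>)) \<longlonglongrightarrow> 0" by simp
  then show ?thesis by (rule Lim_null_comparison[rotated]) (use le in auto)
qed

lemma tr_mp_roots: assumes "a + b = tr2 M" "a * b = det M"
  shows "tr2 (mp M j) = a ^ j + b ^ j"
proof -
  have "tr2 (mp M j) = a ^ j + b ^ j \<and> tr2 (mp M (Suc j)) = a ^ Suc j + b ^ Suc j"
  proof (induction j)
    case 0 then show ?case using assms by (simp add: tr2_def mat_def mult2)
  next
    case (Suc j)
    have "tr2 (mp M (Suc (Suc j))) = tr2 M * tr2 (mp M (Suc j)) - det M * tr2 (mp M j)"
      by (subst mp_rec) (simp add: tr2_def algebra_simps)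
    then show ?case using Suc assms[symmetric] by (simp add: algebra_simps)
  qed
  then show ?thesis by simp
qed

lemma big_root:
  assumes "a + b = tr2 M" "a * b = det M" "\<bar>a\<bar> > 1" "\<bar>b\<bar> \<le> 1"
    and bnd: "\<forall>j. opnorm (mp M j) \<le> hi"
  shows False
proof -
  obtain j where j: "2 * hi + 1 < \<bar>a\<bar> ^ j" using real_arch_pow assms(3) by blast
  have "\<bar>b ^ j\<bar> \<le> 1" using assms(4) by (simp add: power_abs power_le_one)
  moreover have "\<bar>a ^ j\<bar> = \<bar>a\<bar> ^ j" by (simp add: power_abs)
  moreover have "\<bar>a ^ j\<bar> \<le> \<bar>a ^ j + b ^ j\<bar> + \<bar>b ^ j\<bar>"
    using abs_triangle_ineq[of "a ^ j + b ^ j" "-(b ^ j)"] by simp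
  ultimately have "\<bar>a\<bar> ^ j - 1 \<le> \<bar>a ^ j + b ^ j\<bar>" by linarith
  also have "\<dots> = \<bar>tr2 (mp M j)\<bar>" using tr_mp_roots[OF assms(1,2)] by simp
  also have "\<dots> \<le> 2 * hi" using tr2_le[of "mp M j"] bnd by (smt (verit))
  finally show False using j by simp
qed

lemma spec2:
  fixes M :: "real^2^2"
  assumes d1: "\<bar>det M\<bar> < 1" and lo: "0 < lo"
    and bnd: "\<forall>j. lo \<le> opnorm (mp M j) \<and> opnorm (mp M j) \<le> hi"
  shows "(1 + det M)^2 = (tr2 M)^2"
proof (rule ccontr)
  assume H: "(1 + det M)^2 \<noteq> (tr2 M)^2"
  let ?t = "tr2 M" and ?d = "det M"
  have blo: "\<forall>j. lo \<le> opnorm (mp M j)" and bhi: "\<forall>j. opnorm (mp M j) \<le> hi" using bnd by auto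
  show False
  proof (cases "?t^2 < 4 * ?d")
    case True
    have "pp ?t ?d \<longlonglongrightarrow> 0" using pp_complex[OF True] d1 by simp
    then show False using pp_to_zero[OF lo blo] by simp
  next
    case False
    define s where "s = sqrt (?t^2 - 4 * ?d)"
    have s2: "s^2 = ?t^2 - 4 * ?d" using False by (simp add: s_def)
    define a where "a = (?t + s)/2"
    define b where "b = (?t - s)/2"
    have ab1: "a + b = ?t" by (simp add: a_def b_def field_simps)
    have ab2: "a * b = ?d" using s2 by (simp add: a_def b_def field_simps power2_eq_square)
    have ba1: "b + a = ?t" and ba2: "b * a = ?d" using ab1 ab2 by (simp_all add: algebra_simps)
    have na: "\<bar>a\<bar> \<noteq> 1"
    proof
      assume "\<bar>a\<bar> = 1"
      then have "a = 1 \<or> a = -1" by auto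
      then show False
      proof
        assume a: "a = 1"
        then have "b = ?d" using ab2 by simp
        then have "?t = 1 + ?d" using ab1 a by simp
        then show False using H by simp
      next
        assume a: "a = -1"
        then have "b = - ?d" using ab2 by simp
        then have "?t = - (1 + ?d)" using ab1 a by simp
        then show False using H by (metis power2_minus)
      qed
    qed
    have nb: "\<bar>b\<bar> \<noteq> 1"
    proof
      assume "\<bar>b\<bar> = 1"
      then have "b = 1 \<or> b = -1" by auto
      then show False
      proof
        assume a: "b = 1"
        then have "a = ?d" using ab2 by simp
        then have "?t = 1 + ?d" using ab1 a by simp
        then show False using H by simp
      next
        assume a: "b = -1"
        then have "a = - ?d" using ab2 by simp
        then have "?t = - (1 + ?d)" using ab1 a by simp
        then show False using H by (metis power2_minus)
      qed
    qed
    have prod: "\<bar>a\<bar> * \<bar>b\<bar> < 1" using ab2 d1 by (simp add: abs_mult[symmetric])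
    show False
    proof (cases "\<bar>a\<bar> > 1")
      case True
      then have "\<bar>b\<bar> \<le> 1" using prod by (smt (verit) mult_le_cancel_right1 abs_ge_zero)
      then show False using big_root[OF ab1 ab2 True _ bhi] by simp
    next
      case a1: False
      show False
      proof (cases "\<bar>b\<bar> > 1")
        case True
        then have "\<bar>a\<bar> \<le> 1" using a1 by simp
        then show False using big_root[OF ba1 ba2 True _ bhi] by simp
      next
        case False
        then have "pp ?t ?d \<longlonglongrightarrow> 0" using a1 na nb by (intro pp_small_roots[OF ab1 ab2]) auto
        then show False using pp_to_zero[OF lo blo] by simp
      qed
    qed
  qed
qed


lemma eig_decomp:
  fixes B :: "real^2^2"
  assumes sp: "(1 + det B)^2 = (tr2 B)^2" and d1: "\<bar>det B\<bar> < 1"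
  obtains \<epsilon> \<mu> P Q where "\<epsilon> = 1 \<or> \<epsilon> = -1" "\<mu> = \<epsilon> * det B"
    "B ** P = \<epsilon> *\<^sub>R P" "B ** Q = \<mu> *\<^sub>R Q" "P + Q = mat 1" "det Q = 0" "Q \<noteq> 0"
    "\<And>a. mp B a = \<epsilon>^a *\<^sub>R P + \<mu>^a *\<^sub>R Q"
proof -
  define \<epsilon> :: real where "\<epsilon> = (if tr2 B = 1 + det B then 1 else -1)"
  have e: "\<epsilon> = 1 \<or> \<epsilon> = -1" by (simp add: \<epsilon>_def)
  have "tr2 B = 1 + det B \<or> tr2 B = - (1 + det B)" using sp
    by (metis power2_eq_iff)
  then have t: "tr2 B = \<epsilon> * (1 + det B)" by (auto simp: \<epsilon>_def)
  define \<mu> where "\<mu> = \<epsilon> * det B"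
  have ee: "\<epsilon> * \<epsilon> = 1" using e by auto
  have t2: "tr2 B = \<epsilon> + \<mu>" using t by (simp add: \<mu>_def algebra_simps)
  have d2: "det B = \<epsilon> * \<mu>" using ee by (simp add: \<mu>_def mult.assoc[symmetric])
  have "\<bar>\<mu>\<bar> < 1" using d1 e by (auto simp: \<mu>_def)
  then have ne: "\<epsilon> - \<mu> \<noteq> 0" using e by auto
  define k where "k = 1 / (\<epsilon> - \<mu>)"
  have k: "k * (\<epsilon> - \<mu>) = 1" using ne by (simp add: k_def)
  define P where "P = k *\<^sub>R (B - \<mu> *\<^sub>R mat 1)"
  define Q where "Q = k *\<^sub>R (\<epsilon> *\<^sub>R mat 1 - B)"
  have tE: "B$1$1 + B$2$2 = \<epsilon> + \<mu>" using t2 by (simp add: tr2_def)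
  have dE: "B$1$1 * B$2$2 - B$1$2 * B$2$1 = \<epsilon> * \<mu>" using d2 by (simp add: det_2)
  have BP: "B ** P = \<epsilon> *\<^sub>R P"
    unfolding P_def
    apply (rule iffD2[OF mat2_eq])
    apply (simp add: mult2 mat_def)
    using tE dE by algebra
  have BQ: "B ** Q = \<mu> *\<^sub>R Q"
    unfolding Q_def
    apply (rule iffD2[OF mat2_eq])
    apply (simp add: mult2 mat_def)
    using tE dE by algebra
  have PQ: "P + Q = mat 1"
    unfolding P_def Q_def
    apply (rule iffD2[OF mat2_eq])
    apply (simp add: mat_def)
    using k by algebra
  have dQ: "det Q = 0"
    unfolding Q_def det_2
    apply (simp add: mat_def)
    using tE dE ee by algebra
  have Qn: "Q \<noteq> 0"
  proof
    assume "Q = 0"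
    then have "P = mat 1" using PQ by simp
    then have "B = \<epsilon> *\<^sub>R mat 1" using BP by simp
    then have "det B = \<epsilon> * \<epsilon>" by (simp add: det_2 mat_def)
    then show False using ee d1 by simp
  qed
  have pw: "mp B a = \<epsilon>^a *\<^sub>R P + \<mu>^a *\<^sub>R Q" for a
  proof (induction a)
    case 0 then show ?case using PQ by simp
  next
    case (Suc a)
    have "mp B (Suc a) = B ** (\<epsilon>^a *\<^sub>R P + \<mu>^a *\<^sub>R Q)" using Suc by simp
    also have "\<dots> = \<epsilon>^a *\<^sub>R (B ** P) + \<mu>^a *\<^sub>R (B ** Q)"
      by (simp add: matrix_add_ldistrib matrix_scalar_ac scalar_matrix_assoc)
    finally show ?case by (simp add: BP BQ mult.commute)
  qed
  show ?thesis using that[OF e \<mu>_def BP BQ PQ dQ Qn pw] .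
qed

lemma det_mp: "det (mp B a) = det B ^ a"
  by (induction a) (simp_all add: det_mul det_I)

lemma quad_zero:
  fixes \<alpha> \<beta> \<gamma> y1 y2 y3 :: real
  assumes "y1 \<noteq> y2" "y1 \<noteq> y3" "y2 \<noteq> y3"
    and "\<alpha> + \<beta> * y1 + \<gamma> * y1^2 = 0" "\<alpha> + \<beta> * y2 + \<gamma> * y2^2 = 0" "\<alpha> + \<beta> * y3 + \<gamma> * y3^2 = 0"
  shows "\<gamma> = 0 \<and> \<alpha> = 0"
proof -
  have "\<beta> + \<gamma> * (y1 + y2) = 0"
  proof -
    have "(y1 - y2) * (\<beta> + \<gamma> * (y1 + y2)) = 0" using assms(4,5) by (simp add: power2_eq_square algebra_simps)
    then show ?thesis using assms(1) by simp
  qed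
  moreover have "\<beta> + \<gamma> * (y1 + y3) = 0"
  proof -
    have "(y1 - y3) * (\<beta> + \<gamma> * (y1 + y3)) = 0" using assms(4,6) by (simp add: power2_eq_square algebra_simps)
    then show ?thesis using assms(2) by simp
  qed
  ultimately have "\<gamma> * y2 - \<gamma> * y3 = 0" by (simp only: distrib_left)
  then have "\<gamma> * (y2 - y3) = 0" by (simp add: right_diff_distrib)
  then have g: "\<gamma> = 0" using assms(3) by simp
  then have "\<alpha> + \<beta> * y1 = 0" "\<alpha> + \<beta> * y2 = 0" using assms(4,5) by simp_all
  then have "\<beta> * y1 - \<beta> * y2 = 0" by linarith
  then have "\<beta> * (y1 - y2) = 0" by (simp only: right_diff_distrib)
  then have "\<beta> = 0" using assms(1) by simp
  then show ?thesis using g assms(4) by simp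
qed

lemma rank1: assumes "det (Q::real^2^2) = 0"
  shows "Q ** X ** Q = tr2 (Q ** X) *\<^sub>R Q"
  apply (rule iffD2[OF mat2_eq])
  using assms unfolding det_2 by (simp add: mult2 tr2_def) algebra

lemma tr2_comm: "tr2 ((X::real^2^2) ** Y) = tr2 (Y ** X)"
  by (simp add: tr2_def mult2 algebra_simps)

lemma nonzero_vec: assumes "(Q::real^2^2) \<noteq> 0" obtains x where "Q *v x \<noteq> 0"
  using assms matrix_eq[of Q 0] by auto


lemma tr_expand: fixes P1 Q1 P2 Q2 :: "real^2^2"
  shows "tr2 ((P1 + x *\<^sub>R Q1) ** (P2 + y *\<^sub>R Q2)) =
   tr2 (P1 ** P2) + y * tr2 (P1 ** Q2) + x * tr2 (Q1 ** P2) + x * y * tr2 (Q1 ** Q2)"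
  by (simp add: tr2_def mult2 algebra_simps)

lemma pow_distinct: assumes "\<mu> \<noteq> 0" "\<bar>\<mu>\<bar> < (1::real)"
  shows "\<mu>^2 \<noteq> \<mu>^4" "\<mu>^2 \<noteq> \<mu>^6" "\<mu>^4 \<noteq> \<mu>^6"
proof -
  define z where "z = \<mu>^2"
  have z0: "0 < z" using assms by (simp add: z_def)
  have z1: "z < 1" using assms(2) unfolding z_def by (simp add: abs_square_less_1)
  have e4: "\<mu>^4 = z^2" and e6: "\<mu>^6 = z^3" by (simp_all add: z_def flip: power_mult)
  have "z^2 < z" using z0 z1 by (simp add: power2_eq_square)
  moreover have "z^3 < z^2" using z0 z1 by (simp add: power2_eq_square power3_eq_cube)
  ultimately show "\<mu>^2 \<noteq> \<mu>^4" "\<mu>^2 \<noteq> \<mu>^6" "\<mu>^4 \<noteq> \<mu>^6"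
    by (simp_all add: e4 e6 z_def[symmetric])
qed



lemma alg_main:
  fixes B1 B2 :: "real^2^2"
  assumes s1: "(1 + det B1)^2 = (tr2 B1)^2" and s2: "(1 + det B2)^2 = (tr2 B2)^2"
    and d1: "\<bar>det B1\<bar> < 1" "det B1 \<noteq> 0" and d2: "\<bar>det B2\<bar> < 1" "det B2 \<noteq> 0"
    and sp: "\<And>a b. a \<in> {2,4,6} \<Longrightarrow> b \<in> {2,4,6} \<Longrightarrow>
       (1 + det (mp B1 a ** mp B2 b))^2 = (tr2 (mp B1 a ** mp B2 b))^2"
  shows "\<exists>v. v \<noteq> 0 \<and> B1 *v v \<in> span {v} \<and> B2 *v v \<in> span {v}"
proof -
  obtain \<epsilon>1 \<mu>1 P1 Q1 where e1: "\<epsilon>1 = 1 \<or> \<epsilon>1 = -1" and m1: "\<mu>1 = \<epsilon>1 * det B1"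
    and BP1: "B1 ** P1 = \<epsilon>1 *\<^sub>R P1" and BQ1: "B1 ** Q1 = \<mu>1 *\<^sub>R Q1" and PQ1: "P1 + Q1 = mat 1"
    and dQ1: "det Q1 = 0" and Qn1: "Q1 \<noteq> 0" and pw1: "\<And>a. mp B1 a = \<epsilon>1^a *\<^sub>R P1 + \<mu>1^a *\<^sub>R Q1"
    by (rule eig_decomp[OF s1 d1(1)], blast)
  obtain \<epsilon>2 \<mu>2 P2 Q2 where e2: "\<epsilon>2 = 1 \<or> \<epsilon>2 = -1" and m2: "\<mu>2 = \<epsilon>2 * det B2"
    and BP2: "B2 ** P2 = \<epsilon>2 *\<^sub>R P2" and BQ2: "B2 ** Q2 = \<mu>2 *\<^sub>R Q2" and PQ2: "P2 + Q2 = mat 1"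
    and dQ2: "det Q2 = 0" and Qn2: "Q2 \<noteq> 0" and pw2: "\<And>a. mp B2 a = \<epsilon>2^a *\<^sub>R P2 + \<mu>2^a *\<^sub>R Q2"
    by (rule eig_decomp[OF s2 d2(1)], blast)
  have mu1: "\<mu>1 \<noteq> 0" "\<bar>\<mu>1\<bar> < 1" using e1 m1 d1 by auto
  have mu2: "\<mu>2 \<noteq> 0" "\<bar>\<mu>2\<bar> < 1" using e2 m2 d2 by auto
  define T11 where "T11 = tr2 (P1 ** P2)"
  define T12 where "T12 = tr2 (P1 ** Q2)"
  define T21 where "T21 = tr2 (Q1 ** P2)"
  define T22 where "T22 = tr2 (Q1 ** Q2)"
  have eqn: "(1 + \<mu>1^a * \<mu>2^b)^2 = (T11 + \<mu>2^b * T12 + \<mu>1^a * T21 + \<mu>1^a * \<mu>2^b * T22)^2"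
    if a: "a \<in> {2,4,6}" and b: "b \<in> {2,4,6}" for a b :: nat
  proof -
    have ev1: "\<epsilon>1^a = 1" using e1 a by auto
    have ev2: "\<epsilon>2^b = 1" using e2 b by auto
    have "mp B1 a ** mp B2 b = (P1 + \<mu>1^a *\<^sub>R Q1) ** (P2 + \<mu>2^b *\<^sub>R Q2)"
      by (simp add: pw1 pw2 ev1 ev2)
    then have tr: "tr2 (mp B1 a ** mp B2 b) = T11 + \<mu>2^b * T12 + \<mu>1^a * T21 + \<mu>1^a * \<mu>2^b * T22"
      by (simp add: tr_expand T11_def T12_def T21_def T22_def)
    have "det (mp B1 a ** mp B2 b) = (\<epsilon>1^a * det B1 ^ a) * (\<epsilon>2^b * det B2 ^ b)"
      by (simp add: det_mul det_mp ev1 ev2)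
    also have "\<dots> = \<mu>1^a * \<mu>2^b" by (simp add: m1 m2 power_mult_distrib)
    finally show ?thesis using sp[OF a b] tr by simp
  qed
  have C0: "(\<mu>1^a)^2 - (T12 + \<mu>1^a * T22)^2 = 0" if a: "a \<in> {2,4,6}" for a :: nat
  proof -
    define x where "x = \<mu>1^a"
    have q: "(1 - (T11 + x * T21)^2) + (2 * x - 2 * (T11 + x * T21) * (T12 + x * T22)) * \<mu>2^b
          + (x^2 - (T12 + x * T22)^2) * (\<mu>2^b)^2 = 0" if b: "b \<in> {2,4,6}" for b :: nat
    proof -
      have "(1 + x * \<mu>2^b)^2 = (T11 + \<mu>2^b * T12 + x * T21 + x * \<mu>2^b * T22)^2"
        using eqn[OF a b] by (simp add: x_def)
      then show ?thesis by (simp add: power2_eq_square algebra_simps)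
    qed
    have "x^2 - (T12 + x * T22)^2 = 0"
      using quad_zero[OF pow_distinct[OF mu2] q[of 2] q[of 4] q[of 6]]
      by (simp add: mult.commute)
    then show ?thesis by (simp add: x_def)
  qed
  have "T12 = 0"
  proof -
    have q: "(- (T12^2)) + (- (2 * T12 * T22)) * \<mu>1^a + (1 - T22^2) * (\<mu>1^a)^2 = 0"
      if a: "a \<in> {2,4,6}" for a :: nat
      using C0[OF a] by (simp add: power2_eq_square algebra_simps)
    have "- (T12^2) = 0"
      using quad_zero[OF pow_distinct[OF mu1] q[of 2] q[of 4] q[of 6]] by simp
    then show ?thesis by simp
  qed
  show ?thesis
  proof (cases "P1 ** Q2 = 0")
    case True
    obtain x where x: "Q2 *v x \<noteq> 0" using nonzero_vec[OF Qn2] by blast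
    define v where "v = Q2 *v x"
    have Bv2: "B2 *v v = \<mu>2 *\<^sub>R v"
      by (simp add: v_def matrix_vector_mul_assoc BQ2 scaleR_matrix_vector_assoc)
    have Pv: "P1 *v v = 0" by (simp add: v_def matrix_vector_mul_assoc True)
    have Qv: "Q1 *v v = v"
    proof -
      have "(P1 + Q1) *v v = v" using PQ1 by simp
      then show ?thesis by (simp add: matrix_vector_mult_add_rdistrib Pv)
    qed
    have "B1 *v v = B1 *v (Q1 *v v)" using Qv by simp
    also have "\<dots> = (B1 ** Q1) *v v" by (simp only: matrix_vector_mul_assoc)
    also have "\<dots> = (\<mu>1 *\<^sub>R Q1) *v v" by (simp only: BQ1)
    also have "\<dots> = \<mu>1 *\<^sub>R (Q1 *v v)" by (simp only: scaleR_matrix_vector_assoc)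
    also have "\<dots> = \<mu>1 *\<^sub>R v" by (simp only: Qv)
    finally have Bv1: "B1 *v v = \<mu>1 *\<^sub>R v" .
    have vs: "v \<in> span {v}" by (rule span_base) simp
    have n0: "v \<noteq> 0" using x by (simp add: v_def)
    have s1: "B1 *v v \<in> span {v}" unfolding Bv1 by (rule span_mul[OF vs])
    have s2: "B2 *v v \<in> span {v}" unfolding Bv2 by (rule span_mul[OF vs])
    show ?thesis by (intro exI[of _ v] conjI n0 s1 s2)
  next
    case False
    obtain x where x: "(P1 ** Q2) *v x \<noteq> 0" using nonzero_vec[OF False] by blast
    define v where "v = (P1 ** Q2) *v x"
    have "B1 *v v = (B1 ** (P1 ** Q2)) *v x" by (simp only: v_def matrix_vector_mul_assoc)
    also have "\<dots> = ((B1 ** P1) ** Q2) *v x" by (simp only: matrix_mul_assoc)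
    also have "\<dots> = (\<epsilon>1 *\<^sub>R (P1 ** Q2)) *v x" by (simp only: BP1 scalar_matrix_assoc)
    also have "\<dots> = \<epsilon>1 *\<^sub>R v" by (simp only: v_def scaleR_matrix_vector_assoc)
    finally have Bv1: "B1 *v v = \<epsilon>1 *\<^sub>R v" .
    have "Q2 ** P1 ** Q2 = tr2 (Q2 ** P1) *\<^sub>R Q2" by (rule rank1[OF dQ2])
    also have "tr2 (Q2 ** P1) = 0" using \<open>T12 = 0\<close> tr2_comm[of Q2 P1] by (simp add: T12_def)
    finally have QPQ: "Q2 ** P1 ** Q2 = 0" by simp
    have Qv: "Q2 *v v = 0" by (simp add: v_def matrix_vector_mul_assoc matrix_mul_assoc QPQ)
    have Pv: "P2 *v v = v"
    proof -
      have "(P2 + Q2) *v v = v" using PQ2 by simp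
      then show ?thesis by (simp add: matrix_vector_mult_add_rdistrib Qv)
    qed
    have "B2 *v v = B2 *v (P2 *v v)" using Pv by simp
    also have "\<dots> = (B2 ** P2) *v v" by (simp only: matrix_vector_mul_assoc)
    also have "\<dots> = (\<epsilon>2 *\<^sub>R P2) *v v" by (simp only: BP2)
    also have "\<dots> = \<epsilon>2 *\<^sub>R (P2 *v v)" by (simp only: scaleR_matrix_vector_assoc)
    also have "\<dots> = \<epsilon>2 *\<^sub>R v" by (simp only: Pv)
    finally have Bv2: "B2 *v v = \<epsilon>2 *\<^sub>R v" .
    have vs: "v \<in> span {v}" by (rule span_base) simp
    have n0: "v \<noteq> 0" using x by (simp add: v_def)
    have s1: "B1 *v v \<in> span {v}" unfolding Bv1 by (rule span_mul[OF vs])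
    have s2: "B2 *v v \<in> span {v}" unfolding Bv2 by (rule span_mul[OF vs])
    show ?thesis by (intro exI[of _ v] conjI n0 s1 s2)
  qed
qed


definition per :: "nat list \<Rightarrow> nat \<Rightarrow> nat" where
  "per W k = W ! (k mod length W)"

definition lp :: "(nat \<Rightarrow> real^2^2) \<Rightarrow> nat list \<Rightarrow> real^2^2" where
  "lp A W = foldr (\<lambda>a M. A a ** M) W (mat 1)"

definition bs :: "((nat \<Rightarrow> nat) \<Rightarrow> real) \<Rightarrow> (nat \<Rightarrow> nat) \<Rightarrow> nat \<Rightarrow> real" where
  "bs f i n = (\<Sum>k<n. f (shiftk k i))"

definition cnt3 :: "nat list \<Rightarrow> nat" where
  "cnt3 W = length (filter (\<lambda>x. x = 3) W)"

lemma mprod_0[simp]: "mprod B 0 = mat 1"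
  by (simp add: mprod_def)

lemma mprod_Suc: "mprod B (Suc n) = B 0 ** mprod (\<lambda>k. B (Suc k)) n"
proof -
  have "[0..<Suc n] = 0 # map Suc [0..<n]" by (simp add: upt_conv_Cons map_Suc_upt)
  then show ?thesis by (simp add: mprod_def foldr_map o_def)
qed

lemma mprod_add: "mprod B (n + m) = mprod B n ** mprod (\<lambda>k. B (n + k)) m"
proof (induction n arbitrary: B)
  case 0 then show ?case by simp
next
  case (Suc n)
  have "mprod B (Suc n + m) = B 0 ** mprod (\<lambda>k. B (Suc k)) (n + m)"
    using mprod_Suc[of B "n + m"] by simp
  also have "\<dots> = B 0 ** (mprod (\<lambda>k. B (Suc k)) n ** mprod (\<lambda>k. B (Suc (n + k))) m)"
    using Suc[of "\<lambda>k. B (Suc k)"] by simp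
  also have "\<dots> = mprod B (Suc n) ** mprod (\<lambda>k. B (Suc n + k)) m"
    by (simp add: mprod_Suc matrix_mul_assoc)
  finally show ?case .
qed

lemma mprod_cong: "(\<And>k. k < n \<Longrightarrow> B k = B' k) \<Longrightarrow> mprod B n = mprod B' n"
proof (induction n arbitrary: B B')
  case 0 then show ?case by simp
next
  case (Suc n)
  have "mprod (\<lambda>k. B (Suc k)) n = mprod (\<lambda>k. B' (Suc k)) n"
    using Suc.prems by (intro Suc.IH) auto
  then show ?case using Suc.prems[of 0] by (simp add: mprod_Suc)
qed

lemma mprod_list: "mprod (\<lambda>k. A (W ! k)) (length W) = lp A W"
proof (induction W)
  case Nil then show ?case by (simp add: lp_def)
next
  case (Cons a W)
  then show ?case by (simp add: mprod_Suc lp_def)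
qed

lemma mprod_const: "mprod (\<lambda>_. M) n = mp M n"
  by (induction n) (simp_all add: mprod_Suc)

lemma per_less: "k < length W \<Longrightarrow> per W k = W ! k"
  by (simp add: per_def)

lemma per_period: "W \<noteq> [] \<Longrightarrow> per W (length W + k) = per W k"
  by (simp add: per_def)

lemma mprod_per: assumes "W \<noteq> []"
  shows "mprod (\<lambda>k. A (per W k)) (j * length W) = mp (lp A W) j"
proof (induction j)
  case 0 then show ?case by simp
next
  case (Suc j)
  have "mprod (\<lambda>k. A (per W k)) (Suc j * length W) =
     mprod (\<lambda>k. A (per W k)) (length W) ** mprod (\<lambda>k. A (per W (length W + k))) (j * length W)"
    using mprod_add[of _ "length W" "j * length W"] by (simp add: add.commute)
  also have "mprod (\<lambda>k. A (per W k)) (length W) = lp A W"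
    by (subst mprod_list[symmetric], rule mprod_cong) (simp add: per_less)
  also have "(\<lambda>k. A (per W (length W + k))) = (\<lambda>k. A (per W k))"
    using per_period[OF assms] by simp
  finally show ?case using Suc by simp
qed

lemma sum_split: fixes F :: "nat \<Rightarrow> real" and a b :: nat
  shows "(\<Sum>k<a + b. F k) = (\<Sum>k<a. F k) + (\<Sum>k<b. F (a + k))"
  by (induction b) (simp_all add: add.assoc)

lemma sum_periodic: assumes "\<And>k. F (p + k) = F k"
  shows "(\<Sum>k<j * p. F k) = real j * (\<Sum>k<p. (F k :: real))"
proof (induction j)
  case 0 then show ?case by simp
next
  case (Suc j)
  have "(\<Sum>k<Suc j * p. F k) = (\<Sum>k<p. F k) + (\<Sum>k<j * p. F (p + k))"
    using sum_split[of F p "j * p"] by simp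
  then show ?case using Suc assms by (simp add: algebra_simps)
qed

lemma shiftk_per_period: "W \<noteq> [] \<Longrightarrow> shiftk (length W + k) (per W) = shiftk k (per W)"
  unfolding shiftk_def per_def by (rule ext) (metis add.left_commute mod_add_self1)

lemma bs_per: assumes "W \<noteq> []"
  shows "bs f (per W) (j * length W) = real j * bs f (per W) (length W)"
  unfolding bs_def by (rule sum_periodic) (simp add: shiftk_per_period[OF assms])

lemma per_Sigma3: assumes "W \<noteq> []" "set W \<subseteq> {1,2,3}" shows "per W \<in> Sigma3"
  unfolding Sigma3_def per_def
proof (intro CollectI allI)
  fix k
  have "k mod length W < length W" using assms(1) by simp
  then have "W ! (k mod length W) \<in> set W" by (rule nth_mem)
  then show "W ! (k mod length W) \<in> {1,2,3}" using assms(2) by blast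
qed

lemma shiftk_Sigma3: "i \<in> Sigma3 \<Longrightarrow> shiftk k i \<in> Sigma3"
  by (simp add: Sigma3_def shiftk_def)

lemma lp_append: "lp A (x @ y) = lp A x ** lp A y"
  by (induction x) (simp_all add: lp_def matrix_mul_assoc)

lemma lp_replicate: "lp A (replicate a z) = mp (A z) a"
  by (induction a) (simp_all add: lp_def)

lemma lp_three: assumes "A 3 = c *\<^sub>R mat 1" "set W \<subseteq> {1,2,3}"
  shows "lp A W = c ^ cnt3 W *\<^sub>R lp A (filter (\<lambda>x. x \<noteq> 3) W)"
  using assms(2)
proof (induction W)
  case Nil then show ?case by (simp add: lp_def cnt3_def)
next
  case (Cons a W)
  then have IH: "lp A W = c ^ cnt3 W *\<^sub>R lp A (filter (\<lambda>x. x \<noteq> 3) W)" by simp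
  show ?case
  proof (cases "a = 3")
    case True
    then show ?thesis using IH assms(1)
      by (simp add: lp_def cnt3_def scalar_matrix_assoc[symmetric])
  next
    case False
    then show ?thesis using IH
      by (simp add: lp_def cnt3_def matrix_scalar_ac scalar_matrix_assoc)
  qed
qed

lemma mp_scale: "mp (c *\<^sub>R X) j = c ^ j *\<^sub>R mp X j"
  by (induction j) (simp_all add: matrix_scalar_ac scalar_matrix_assoc[symmetric] mult.commute)

lemma opnorm_scale: "opnorm (c *\<^sub>R X) = \<bar>c\<bar> * opnorm X"
proof -
  have "(\<lambda>x. (c *\<^sub>R X) *v x) = (\<lambda>x. c *\<^sub>R (X *v x))"
    by (simp add: scaleR_matrix_vector_assoc)
  then show ?thesis unfolding opnorm_def
    using onorm_scaleR[OF matrix_vector_mul_bounded_linear[of X], of c] by simp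
qed

lemma opnorm_pos: assumes "invertible X" shows "opnorm X > 0"
proof -
  have "\<not> (\<forall>x. X *v x = 0)"
  proof
    assume "\<forall>x. X *v x = 0"
    then have "X = 0" by (simp add: matrix_eq)
    then show False using assms by (simp add: invertible_det_nz det_2)
  qed
  then show ?thesis unfolding opnorm_def
    using onorm_pos_lt[OF matrix_vector_mul_bounded_linear[of X]] by simp
qed

lemma opnorm_I: "opnorm (mat 1) = 1"
proof -
  have "(\<lambda>x. (mat 1 :: real^2^2) *v x) = (\<lambda>x. x)" by simp
  then show ?thesis unfolding opnorm_def using onorm_id by metis
qed

lemma invertible_I2: "invertible (mat 1 :: real^2^2)"
  by (simp add: invertible_det_nz det_I)

lemma mp_invertible: "invertible X \<Longrightarrow> invertible (mp X j)"
  by (induction j) (simp_all add: invertible_I2 invertible_mult)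

lemma lp_invertible: "(\<And>a. a \<in> set W \<Longrightarrow> invertible (A a)) \<Longrightarrow> invertible (lp A W)"
  by (induction W) (simp_all add: lp_def invertible_I2 invertible_mult)

lemma j_zero: assumes "\<And>j::nat. \<bar>real j * \<delta>\<bar> \<le> D" shows "\<delta> = 0"
proof (rule ccontr)
  assume "\<delta> \<noteq> 0"
  then have p: "\<bar>\<delta>\<bar> > 0" by simp
  obtain j :: nat where "D / \<bar>\<delta>\<bar> < real j" using reals_Archimedean2 by blast
  then have "D < real j * \<bar>\<delta>\<bar>" using p by (simp add: field_simps)
  also have "\<dots> = \<bar>real j * \<delta>\<bar>" by (simp add: abs_mult)
  finally show False using assms[of j] by simp
qed

lemma lim_zero_bound: assumes "0 < \<tau>" "\<tau> < 1" "\<And>m::nat. m \<ge> 1 \<Longrightarrow> \<bar>x\<bar> \<le> (2 * real m + L) * K * \<tau> ^ m"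
  shows "x = (0::real)"
proof (rule ccontr)
  assume "x \<noteq> 0"
  then have xp: "\<bar>x\<bar> > 0" by simp
  have "(\<lambda>m. (2 * (of_nat m * \<tau> ^ m) + L * \<tau> ^ m) * K) \<longlonglongrightarrow> (2 * 0 + L * 0) * K"
    using assms(1,2) by (intro tendsto_intros powser_times_n_limit_0 LIMSEQ_realpow_zero) auto
  then have "(\<lambda>m. (2 * real m + L) * K * \<tau> ^ m) \<longlonglongrightarrow> 0" by (simp add: algebra_simps)
  from order_tendstoD(2)[OF this xp] obtain N where N: "\<And>m. m \<ge> N \<Longrightarrow> (2 * real m + L) * K * \<tau> ^ m < \<bar>x\<bar>"
    by (auto simp: eventually_sequentially)
  have "\<bar>x\<bar> \<le> (2 * real (N + 1) + L) * K * \<tau> ^ (N + 1)" using assms(3)[of "N+1"] by simp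
  moreover have "(2 * real (N + 1) + L) * K * \<tau> ^ (N + 1) < \<bar>x\<bar>" using N[of "N+1"] by simp
  ultimately show False by simp
qed


lemma agreeA:
  fixes W1 W2 :: "nat list"
  assumes "1 \<le> m" "m \<le> length W1" "m \<le> length W2" "\<forall>q<m. W1 ! q = 3" "\<forall>q<m. W2 ! q = 3"
    and r: "r < length W1 + m"
  shows "per (W1 @ W2) r = per W1 r"
proof (cases "r < length W1")
  case True
  then show ?thesis by (simp add: per_def nth_append)
next
  case False
  have r1: "r mod length W1 = r - length W1"
    using False r assms(2) by (simp add: le_mod_geq)
  have "per W1 r = 3" using r1 False r assms(4) by (simp add: per_def)
  moreover have "per (W1 @ W2) r = 3"
    using False r assms(3,5) by (simp add: per_def nth_append)
  ultimately show ?thesis by simp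
qed

lemma agreeB:
  fixes W1 W2 :: "nat list"
  assumes "1 \<le> m" "m \<le> length W1" "m \<le> length W2" "\<forall>q<m. W1 ! q = 3" "\<forall>q<m. W2 ! q = 3"
    and r: "r < length W2 + m"
  shows "per (W1 @ W2) (length W1 + r) = per W2 r"
proof (cases "r < length W2")
  case True
  then show ?thesis by (simp add: per_def nth_append)
next
  case False
  have r2: "r mod length W2 = r - length W2"
    using False r assms(3) by (simp add: le_mod_geq)
  have "per W2 r = 3" using r2 False r assms(5) by (simp add: per_def)
  moreover have "per (W1 @ W2) (length W1 + r) = 3"
  proof -
    have "(length W1 + r) mod length (W1 @ W2) = r - length W2"
      using False r assms(2,3) by (simp add: le_mod_geq)
    moreover have "r - length W2 < length W1" "r - length W2 < m" using False r assms(2) by auto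
    ultimately show ?thesis using assms(4) by (simp add: per_def nth_append)
  qed
  ultimately show ?thesis by simp
qed

lemma det_scale2: "det (k *\<^sub>R (M::real^2^2)) = k^2 * det M"
  by (simp add: det_2 power2_eq_square algebra_simps)

lemma dec_lemma: assumes "0 \<le> x" "0 < \<tau>" "\<tau> < 1" "\<And>n. n \<ge> 1 \<Longrightarrow> x ^ n \<le> K * \<tau> ^ n"
  shows "x < (1::real)"
proof (rule ccontr)
  assume "\<not> x < 1"
  then have x1: "x \<ge> 1" by simp
  have "(\<lambda>n. K * \<tau> ^ n) \<longlonglongrightarrow> K * 0" using assms(2,3) by (intro tendsto_intros LIMSEQ_realpow_zero) auto
  from order_tendstoD(2)[OF this[simplified] zero_less_one] obtain N where
    N: "\<And>n. n \<ge> N \<Longrightarrow> K * \<tau> ^ n < 1" by (auto simp: eventually_sequentially)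
  have "1 \<le> x ^ (N + 1)" by (rule one_le_power[OF x1])
  also have "\<dots> \<le> K * \<tau> ^ (N + 1)" using assms(4)[of "N+1"] by simp
  also have "\<dots> < 1" using N[of "N+1"] by simp
  finally show False by simp
qed

lemma det_small:
  fixes B :: "real^2^2"
  assumes "0 < \<tau>" "\<tau> < 1" and dom: "\<And>n. n \<ge> 1 \<Longrightarrow> \<bar>det (mp B n)\<bar> / (opnorm (mp B n))^2 \<le> K * \<tau>^n"
    and lnb: "\<And>n. ln (opnorm (mp B n)) \<le> real n * \<gamma> + C" and inv: "invertible B"
  shows "\<bar>det (exp (-\<gamma>) *\<^sub>R B)\<bar> < 1"
proof -
  define x where "x = \<bar>det (exp (-\<gamma>) *\<^sub>R B)\<bar>"
  have xe: "x = exp (-\<gamma>)^2 * \<bar>det B\<bar>" by (simp add: x_def det_scale2 abs_mult)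
  have "x ^ n \<le> (K * exp (2 * C)) * \<tau> ^ n" if n: "n \<ge> 1" for n
  proof -
    have op: "opnorm (mp B n) > 0" by (rule opnorm_pos[OF mp_invertible[OF inv]])
    have opb: "opnorm (mp B n) \<le> exp (real n * \<gamma> + C)"
      using lnb[of n] op by (metis exp_le_cancel_iff exp_ln)
    have "\<bar>det B\<bar> ^ n \<le> K * \<tau>^n * (opnorm (mp B n))^2"
      using dom[OF n] op by (simp add: det_mp power_abs divide_le_eq)
    also have "\<dots> \<le> K * \<tau>^n * (exp (real n * \<gamma> + C))^2"
    proof (rule mult_left_mono)
      show "(opnorm (mp B n))^2 \<le> (exp (real n * \<gamma> + C))^2"
        using opb op by (simp add: power_mono)
      have "0 \<le> \<bar>det (mp B n)\<bar> / (opnorm (mp B n))^2" by simp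
      then show "0 \<le> K * \<tau>^n" using dom[OF n] by linarith
    qed
    finally have h: "\<bar>det B\<bar> ^ n \<le> K * \<tau>^n * (exp (real n * \<gamma> + C))^2" .
    have "x ^ n = exp (-\<gamma>) ^ (2 * n) * \<bar>det B\<bar> ^ n" by (simp add: xe power_mult_distrib power_mult)
    also have "\<dots> \<le> exp (-\<gamma>) ^ (2 * n) * (K * \<tau>^n * (exp (real n * \<gamma> + C))^2)"
      using h by (simp add: mult_left_mono)
    also have "exp (-\<gamma>) ^ (2 * n) * (exp (real n * \<gamma> + C))^2 = exp (2 * C)"
    proof -
      have "exp (-\<gamma>) ^ (2 * n) = exp (real (2 * n) * (-\<gamma>))" by (rule exp_of_nat_mult[symmetric])
      moreover have "(exp (real n * \<gamma> + C))^2 = exp (2 * (real n * \<gamma> + C))"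
        by (simp add: exp_of_nat_mult[symmetric])
      ultimately show ?thesis by (simp add: exp_add[symmetric] algebra_simps)
    qed
    then have "exp (-\<gamma>) ^ (2 * n) * (K * \<tau>^n * (exp (real n * \<gamma> + C))^2) = K * exp (2 * C) * \<tau> ^ n"
      by (simp add: algebra_simps)
    finally show ?thesis by simp
  qed
  then have "x < 1" using dec_lemma[of x \<tau> "K * exp (2 * C)"] assms(1,2) by (simp add: x_def)
  then show ?thesis by (simp add: x_def)
qed


lemma filter_rep3: "filter (\<lambda>x. x \<noteq> 3) (replicate m (3::nat)) = []"
  by (induction m) auto

lemma filter_12: "set u \<subseteq> {1,2} \<Longrightarrow> filter (\<lambda>x. x \<noteq> (3::nat)) u = u"
  by (induction u) auto

lemma main_contra:
  fixes A :: "nat \<Rightarrow> real^2^2" and c :: real and f and C :: real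
  assumes inv1: "invertible (A 1)" and inv2: "invertible (A 2)"
    and c0: "c \<noteq> 0" and A3: "A 3 = c *\<^sub>R mat 1"
    and irr: "irreducible_pair (A 1) (A 2)" and dom: "dominated_pair (A 1) (A 2)"
    and hf: "holder_potential f" and Cpos: "C > 0"
    and H: "\<forall>i\<in>Sigma3. \<forall>n. \<bar>bs f i n - ln (opnorm (word_prod A i n))\<bar> \<le> C"
  shows False
proof -
  define G where "G W = bs f (per W) (length W) - real (cnt3 W) * ln \<bar>c\<bar>" for W
  have invA: "invertible (A a)" if "a \<in> {1,2}" for a using that inv1 inv2 by auto
  have Gbound: "\<bar>real j * G W - ln (opnorm (mp (lp A (filter (\<lambda>x. x \<noteq> 3) W)) j))\<bar> \<le> C"
    if W: "W \<noteq> []" "set W \<subseteq> {1,2,3}" for W j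
  proof -
    define Y where "Y = lp A (filter (\<lambda>x. x \<noteq> 3) W)"
    define N where "N = cnt3 W"
    have invY: "invertible Y" unfolding Y_def
      by (rule lp_invertible) (use W(2) invA in auto)
    have Zp: "opnorm (mp Y j) > 0" by (rule opnorm_pos[OF mp_invertible[OF invY]])
    have h: "\<bar>bs f (per W) (j * length W) - ln (opnorm (word_prod A (per W) (j * length W)))\<bar> \<le> C"
      using H per_Sigma3[OF W] by blast
    have wp: "word_prod A (per W) (j * length W) = (c ^ N) ^ j *\<^sub>R mp Y j"
      unfolding word_prod_def mprod_per[OF W(1)] lp_three[of A c W, OF A3 W(2)] mp_scale Y_def N_def ..
    have cp: "\<bar>(c ^ N) ^ j\<bar> > 0" using c0 by simp
    have "ln (opnorm (word_prod A (per W) (j * length W))) = ln (\<bar>(c ^ N) ^ j\<bar>) + ln (opnorm (mp Y j))"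
      unfolding wp opnorm_scale using cp Zp by (simp add: ln_mult)
    also have "ln (\<bar>(c ^ N) ^ j\<bar>) = real j * (real N * ln \<bar>c\<bar>)"
      using c0 by (simp add: power_abs ln_realpow)
    finally have e: "ln (opnorm (word_prod A (per W) (j * length W))) = real j * (real N * ln \<bar>c\<bar>) + ln (opnorm (mp Y j))" .
    have "bs f (per W) (j * length W) = real j * bs f (per W) (length W)" by (rule bs_per[OF W(1)])
    then show ?thesis using h unfolding e G_def N_def[symmetric] Y_def[symmetric]
      by (simp add: algebra_simps)
  qed
  have Geq: "G W = G W'" if W: "W \<noteq> []" "set W \<subseteq> {1,2,3}" and W': "W' \<noteq> []" "set W' \<subseteq> {1,2,3}"
    and fe: "filter (\<lambda>x. x \<noteq> 3) W = filter (\<lambda>x. x \<noteq> 3) W'" for W W'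
  proof -
    have "\<bar>real j * (G W - G W')\<bar> \<le> 2 * C" for j
      using Gbound[OF W, of j] Gbound[OF W', of j] fe by (simp add: abs_le_iff algebra_simps)
    then have "G W - G W' = 0" by (rule j_zero)
    then show ?thesis by simp
  qed
  obtain K \<tau> where K: "K > 0" and tau: "0 < \<tau>" "\<tau> < 1"
    and hol: "\<And>i j n. i \<in> Sigma3 \<Longrightarrow> j \<in> Sigma3 \<Longrightarrow> (\<forall>k<n. i k = j k) \<Longrightarrow> \<bar>f i - f j\<bar> \<le> K * \<tau> ^ n"
    using hf unfolding holder_potential_def by blast
  have Gadd: "\<bar>G (replicate m 3 @ u @ replicate m 3 @ v) - G (replicate m 3 @ u) - G (replicate m 3 @ v)\<bar>
      \<le> real (2 * m + length u + length v) * (K * \<tau> ^ m)"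
    if m: "m \<ge> 1" and u: "set u \<subseteq> {1,2,3}" and v: "set v \<subseteq> {1,2,3}" for m u v
  proof -
    define W1 where "W1 = replicate m (3::nat) @ u"
    define W2 where "W2 = replicate m (3::nat) @ v"
    define W where "W = W1 @ W2"
    have WW: "replicate m 3 @ u @ replicate m 3 @ v = W" by (simp add: W_def W1_def W2_def)
    have l1: "m \<le> length W1" and l2: "m \<le> length W2" by (simp_all add: W1_def W2_def)
    have t1: "\<forall>q<m. W1 ! q = 3" and t2: "\<forall>q<m. W2 ! q = 3" by (simp_all add: W1_def W2_def nth_append)
    have n1: "W1 \<noteq> []" and n2: "W2 \<noteq> []" and n: "W \<noteq> []" using m by (auto simp: W1_def W2_def W_def)
    have s1: "set W1 \<subseteq> {1,2,3}" and s2: "set W2 \<subseteq> {1,2,3}" and s: "set W \<subseteq> {1,2,3}"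
      using u v by (auto simp: W1_def W2_def W_def)
    have S1: "per W1 \<in> Sigma3" by (rule per_Sigma3[OF n1 s1])
    have S2: "per W2 \<in> Sigma3" by (rule per_Sigma3[OF n2 s2])
    have S: "per W \<in> Sigma3" by (rule per_Sigma3[OF n s])
    have b1: "\<bar>f (shiftk k (per W)) - f (shiftk k (per W1))\<bar> \<le> K * \<tau> ^ m" if k: "k < length W1" for k
    proof (rule hol[OF shiftk_Sigma3[OF S] shiftk_Sigma3[OF S1]], intro allI impI)
      fix q assume "q < m"
      then show "shiftk k (per W) q = shiftk k (per W1) q"
        unfolding shiftk_def W_def using agreeA[OF m l1 l2 t1 t2, of "q + k"] k by simp
    qed
    have b2: "\<bar>f (shiftk (length W1 + k) (per W)) - f (shiftk k (per W2))\<bar> \<le> K * \<tau> ^ m"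
      if k: "k < length W2" for k
    proof (rule hol[OF shiftk_Sigma3[OF S] shiftk_Sigma3[OF S2]], intro allI impI)
      fix q assume "q < m"
      then show "shiftk (length W1 + k) (per W) q = shiftk k (per W2) q"
        unfolding shiftk_def W_def using agreeB[OF m l1 l2 t1 t2, of "q + k"] k
        by (simp add: add.left_commute add.commute)
    qed
    have c3: "cnt3 W = cnt3 W1 + cnt3 W2" by (simp add: W_def cnt3_def)
    have lW: "length W = length W1 + length W2" by (simp add: W_def)
    have split: "bs f (per W) (length W) = (\<Sum>k<length W1. f (shiftk k (per W)))
        + (\<Sum>k<length W2. f (shiftk (length W1 + k) (per W)))"
      unfolding bs_def lW by (rule sum_split)
    have diff: "G W - G W1 - G W2 = (\<Sum>k<length W1. f (shiftk k (per W)) - f (shiftk k (per W1)))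
        + (\<Sum>k<length W2. f (shiftk (length W1 + k) (per W)) - f (shiftk k (per W2)))"
      unfolding G_def split c3 by (simp add: sum_subtractf bs_def algebra_simps)
    have e1: "\<bar>\<Sum>k<length W1. f (shiftk k (per W)) - f (shiftk k (per W1))\<bar> \<le> real (length W1) * (K * \<tau> ^ m)"
    proof -
      have "\<bar>\<Sum>k<length W1. f (shiftk k (per W)) - f (shiftk k (per W1))\<bar>
          \<le> (\<Sum>k<length W1. \<bar>f (shiftk k (per W)) - f (shiftk k (per W1))\<bar>)" by (rule sum_abs)
      also have "\<dots> \<le> of_nat (card {..<length W1}) * (K * \<tau> ^ m)"
        by (rule sum_bounded_above) (use b1 in auto)
      finally show ?thesis by simp
    qed
    have e2: "\<bar>\<Sum>k<length W2. f (shiftk (length W1 + k) (per W)) - f (shiftk k (per W2))\<bar> \<le> real (length W2) * (K * \<tau> ^ m)"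
    proof -
      have "\<bar>\<Sum>k<length W2. f (shiftk (length W1 + k) (per W)) - f (shiftk k (per W2))\<bar>
          \<le> (\<Sum>k<length W2. \<bar>f (shiftk (length W1 + k) (per W)) - f (shiftk k (per W2))\<bar>)" by (rule sum_abs)
      also have "\<dots> \<le> of_nat (card {..<length W2}) * (K * \<tau> ^ m)"
        by (rule sum_bounded_above) (use b2 in auto)
      finally show ?thesis by simp
    qed
    have "\<bar>G W - G W1 - G W2\<bar> \<le> real (length W1) * (K * \<tau> ^ m) + real (length W2) * (K * \<tau> ^ m)"
      unfolding diff using e1 e2 abs_triangle_ineq by (smt (verit))
    also have "\<dots> = real (2 * m + length u + length v) * (K * \<tau> ^ m)"
      by (simp add: W1_def W2_def algebra_simps)
    finally have "\<bar>G W - G W1 - G W2\<bar> \<le> real (2 * m + length u + length v) * (K * \<tau> ^ m)" .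
    then show ?thesis by (simp add: W_def W1_def W2_def)
  qed
  define \<Gamma> where "\<Gamma> u = G (3 # u)" for u
  have Grep: "G (replicate m 3 @ u) = \<Gamma> u" if m: "m \<ge> 1" and u: "set u \<subseteq> {1,2}" for m u
    unfolding \<Gamma>_def
  proof (rule Geq)
    show "replicate m 3 @ u \<noteq> []" using m by simp
    show "set (replicate m 3 @ u) \<subseteq> {1,2,3}" using u by auto
    show "3 # u \<noteq> []" by simp
    show "set (3 # u) \<subseteq> {1,2,3}" using u by auto
    show "filter (\<lambda>x. x \<noteq> 3) (replicate m 3 @ u) = filter (\<lambda>x. x \<noteq> 3) (3 # u)"
      using u by (simp add: filter_rep3 filter_12)
  qed
  have Grep2: "G (replicate m 3 @ u @ replicate m 3 @ v) = \<Gamma> (u @ v)"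
    if m: "m \<ge> 1" and u: "set u \<subseteq> {1,2}" and v: "set v \<subseteq> {1,2}" for m u v
    unfolding \<Gamma>_def
  proof (rule Geq)
    show "replicate m 3 @ u @ replicate m 3 @ v \<noteq> []" using m by simp
    show "set (replicate m 3 @ u @ replicate m 3 @ v) \<subseteq> {1,2,3}" using u v by auto
    show "3 # u @ v \<noteq> []" by simp
    show "set (3 # u @ v) \<subseteq> {1,2,3}" using u v by auto
    show "filter (\<lambda>x. x \<noteq> 3) (replicate m 3 @ u @ replicate m 3 @ v) = filter (\<lambda>x. x \<noteq> 3) (3 # u @ v)"
      using u v by (simp add: filter_rep3 filter_12)
  qed
  have \<Gamma>add: "\<Gamma> (u @ v) = \<Gamma> u + \<Gamma> v" if u: "set u \<subseteq> {1,2}" and v: "set v \<subseteq> {1,2}" for u v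
  proof -
    have "\<Gamma> (u @ v) - \<Gamma> u - \<Gamma> v = 0"
    proof (rule lim_zero_bound[OF tau])
      fix m :: nat assume m: "m \<ge> 1"
      have "\<bar>\<Gamma> (u @ v) - \<Gamma> u - \<Gamma> v\<bar> \<le> real (2 * m + length u + length v) * (K * \<tau> ^ m)"
        using Gadd[OF m, of u v] u v unfolding Grep[OF m u] Grep[OF m v] Grep2[OF m u v] by auto
      also have "\<dots> = (2 * real m + real (length u + length v)) * K * \<tau> ^ m" by (simp add: algebra_simps)
      finally show "\<bar>\<Gamma> (u @ v) - \<Gamma> u - \<Gamma> v\<bar> \<le> (2 * real m + real (length u + length v)) * K * \<tau> ^ m" .
    qed
    then show ?thesis by simp
  qed
  define \<gamma>1 where "\<gamma>1 = \<Gamma> [1]"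
  define \<gamma>2 where "\<gamma>2 = \<Gamma> [2]"
  have \<Gamma>B: "\<Gamma> (replicate b 2) = real b * \<gamma>2" for b
  proof (induction b)
    case 0
    have "\<Gamma> ([] @ []) = \<Gamma> [] + \<Gamma> []" by (rule \<Gamma>add) auto
    then show ?case by simp
  next
    case (Suc b)
    have "\<Gamma> ([2] @ replicate b 2) = \<Gamma> [2] + \<Gamma> (replicate b 2)" by (rule \<Gamma>add) auto
    then show ?case using Suc by (simp add: \<gamma>2_def algebra_simps)
  qed
  have \<Gamma>AB: "\<Gamma> (replicate a 1 @ replicate b 2) = real a * \<gamma>1 + real b * \<gamma>2" for a b
  proof (induction a)
    case 0 then show ?case using \<Gamma>B by simp
  next
    case (Suc a)
    have "\<Gamma> ([1] @ (replicate a 1 @ replicate b 2)) = \<Gamma> [1] + \<Gamma> (replicate a 1 @ replicate b 2)"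
      by (rule \<Gamma>add) auto
    then show ?case using Suc by (simp add: \<gamma>1_def algebra_simps)
  qed
  have star: "\<bar>real j * (real a * \<gamma>1 + real b * \<gamma>2) - ln (opnorm (mp (mp (A 1) a ** mp (A 2) b) j))\<bar> \<le> C" for a b j
  proof -
    define W where "W = 3 # (replicate a (1::nat) @ replicate b 2)"
    have W: "W \<noteq> []" "set W \<subseteq> {1,2,3}" by (auto simp: W_def)
    have fW: "filter (\<lambda>x. x \<noteq> 3) W = replicate a 1 @ replicate b 2"
      unfolding W_def using filter_12[of "replicate a 1 @ replicate b 2"] by auto
    have "lp A (filter (\<lambda>x. x \<noteq> 3) W) = mp (A 1) a ** mp (A 2) b"
      unfolding fW lp_append lp_replicate ..
    moreover have "G W = real a * \<gamma>1 + real b * \<gamma>2" using \<Gamma>AB unfolding \<Gamma>_def W_def by simp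
    ultimately show ?thesis using Gbound[OF W, of j] by simp
  qed
  define B1 where "B1 = exp (-\<gamma>1) *\<^sub>R A 1"
  define B2 where "B2 = exp (-\<gamma>2) *\<^sub>R A 2"
  have Bbnd: "exp (-C) \<le> opnorm (mp (mp B1 a ** mp B2 b) j) \<and> opnorm (mp (mp B1 a ** mp B2 b) j) \<le> exp C"
    for a b j
  proof -
    define X where "X = mp (A 1) a ** mp (A 2) b"
    define t where "t = real j * (real a * \<gamma>1 + real b * \<gamma>2)"
    have invX: "invertible X" unfolding X_def
      by (intro invertible_mult mp_invertible inv1 inv2)
    have Zp: "opnorm (mp X j) > 0" by (rule opnorm_pos[OF mp_invertible[OF invX]])
    have "mp B1 a ** mp B2 b = (exp (-\<gamma>1) ^ a * exp (-\<gamma>2) ^ b) *\<^sub>R X"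
      unfolding B1_def B2_def X_def mp_scale by (simp add: matrix_scalar_ac scalar_matrix_assoc mult.commute)
    then have "mp (mp B1 a ** mp B2 b) j = ((exp (-\<gamma>1) ^ a * exp (-\<gamma>2) ^ b) ^ j) *\<^sub>R mp X j"
      by (simp add: mp_scale)
    also have "(exp (-\<gamma>1) ^ a * exp (-\<gamma>2) ^ b) ^ j = exp (- t)"
      by (simp add: t_def exp_of_nat_mult[symmetric] exp_add[symmetric] algebra_simps)
    finally have V: "opnorm (mp (mp B1 a ** mp B2 b) j) = exp (- t) * opnorm (mp X j)"
      by (simp add: opnorm_scale)
    have lnV: "ln (opnorm (mp (mp B1 a ** mp B2 b) j)) = ln (opnorm (mp X j)) - t"
      unfolding V using Zp by (simp add: ln_mult)
    have "\<bar>t - ln (opnorm (mp X j))\<bar> \<le> C" using star[of j a b] by (simp add: t_def X_def)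
    then have l: "\<bar>ln (opnorm (mp (mp B1 a ** mp B2 b) j))\<bar> \<le> C" unfolding lnV by simp
    have p: "opnorm (mp (mp B1 a ** mp B2 b) j) > 0" unfolding V using Zp by simp
    have "exp (-C) \<le> exp (ln (opnorm (mp (mp B1 a ** mp B2 b) j)))" using l by simp
    moreover have "exp (ln (opnorm (mp (mp B1 a ** mp B2 b) j))) \<le> exp C" using l by simp
    ultimately show ?thesis using p by simp
  qed
  have expC: "0 < exp (-C)" by simp
  have mpB1: "mp (mp B1 1 ** mp B2 0) j = mp B1 j" for j by simp
  have mpB2: "mp (mp B1 0 ** mp B2 1) j = mp B2 j" for j by simp
  obtain K' \<tau>' where tau': "0 < \<tau>'" "\<tau>' < 1" and domK: "\<forall>n\<ge>1. \<forall>B. (\<forall>k<n. B k \<in> {A 1, A 2}) \<longrightarrow>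
        \<bar>det (mprod B n)\<bar> / (opnorm (mprod B n))^2 \<le> K' * \<tau>' ^ n"
    using dom unfolding dominated_pair_def by blast
  have dB1: "\<bar>det B1\<bar> < 1" unfolding B1_def
  proof (rule det_small[OF tau'])
    fix n :: nat assume "n \<ge> 1"
    then show "\<bar>det (mp (A 1) n)\<bar> / (opnorm (mp (A 1) n))^2 \<le> K' * \<tau>' ^ n"
      using domK[rule_format, of n "\<lambda>_. A 1"] by (simp add: mprod_const)
  next
    fix n :: nat
    have "mp (mp (A 1) 1 ** mp (A 2) 0) n = mp (A 1) n" by simp
    then show "ln (opnorm (mp (A 1) n)) \<le> real n * \<gamma>1 + C" using star[of n 1 0] by (simp add: abs_le_iff)
  qed (rule inv1)
  have dB2: "\<bar>det B2\<bar> < 1" unfolding B2_def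
  proof (rule det_small[OF tau'])
    fix n :: nat assume "n \<ge> 1"
    then show "\<bar>det (mp (A 2) n)\<bar> / (opnorm (mp (A 2) n))^2 \<le> K' * \<tau>' ^ n"
      using domK[rule_format, of n "\<lambda>_. A 2"] by (simp add: mprod_const)
  next
    fix n :: nat
    have "mp (mp (A 1) 0 ** mp (A 2) 1) n = mp (A 2) n" by simp
    then show "ln (opnorm (mp (A 2) n)) \<le> real n * \<gamma>2 + C" using star[of n 0 1] by (simp add: abs_le_iff)
  qed (rule inv2)
  have nz1: "det B1 \<noteq> 0" using inv1 by (simp add: B1_def det_scale2 invertible_det_nz)
  have nz2: "det B2 \<noteq> 0" using inv2 by (simp add: B2_def det_scale2 invertible_det_nz)
  have s1: "(1 + det B1)^2 = (tr2 B1)^2"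
    by (rule spec2[OF dB1 expC, where hi="exp C"]) (use Bbnd[of 1 0] in simp)
  have s2: "(1 + det B2)^2 = (tr2 B2)^2"
    by (rule spec2[OF dB2 expC, where hi="exp C"]) (use Bbnd[of 0 1] in simp)
  have sp: "(1 + det (mp B1 a ** mp B2 b))^2 = (tr2 (mp B1 a ** mp B2 b))^2"
    if a: "a \<in> {2,4,6}" and b: "b \<in> {2,4,6}" for a b :: nat
  proof (rule spec2[OF _ expC, where hi="exp C"])
    have "\<bar>det B1\<bar> ^ a < 1" using dB1 a by (subst power_less_one_iff) auto
    moreover have "\<bar>det B2\<bar> ^ b \<le> 1" using dB2 by (intro power_le_one) auto
    moreover have "\<bar>det B1\<bar> ^ a * \<bar>det B2\<bar> ^ b \<le> \<bar>det B1\<bar> ^ a * 1"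
      using \<open>\<bar>det B2\<bar> ^ b \<le> 1\<close> by (intro mult_left_mono) auto
    ultimately have "\<bar>det B1\<bar> ^ a * \<bar>det B2\<bar> ^ b < 1" by linarith
    then show "\<bar>det (mp B1 a ** mp B2 b)\<bar> < 1" by (simp add: det_mul det_mp abs_mult power_abs)
    show "\<forall>j. exp (-C) \<le> opnorm (mp (mp B1 a ** mp B2 b) j) \<and> opnorm (mp (mp B1 a ** mp B2 b) j) \<le> exp C"
      using Bbnd by blast
  qed
  obtain v where v: "v \<noteq> 0" "B1 *v v \<in> span {v}" "B2 *v v \<in> span {v}"
    using alg_main[OF s1 s2 dB1 nz1 dB2 nz2 sp] by blast
  have "A 1 *v v = exp \<gamma>1 *\<^sub>R (B1 *v v)"
    by (simp add: B1_def scaleR_matrix_vector_assoc[symmetric] exp_minus)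
  then have a1: "A 1 *v v \<in> span {v}" using v(2) by (simp add: span_mul)
  have "A 2 *v v = exp \<gamma>2 *\<^sub>R (B2 *v v)"
    by (simp add: B2_def scaleR_matrix_vector_assoc[symmetric] exp_minus)
  then have a2: "A 2 *v v \<in> span {v}" using v(3) by (simp add: span_mul)
  have "\<exists>w::real^2. w \<noteq> 0 \<and> A 1 *v w \<in> span {w} \<and> A 2 *v w \<in> span {w}"
    by (intro exI[of _ v] conjI v(1) a1 a2)
  then show False using irr[unfolded irreducible_pair_def] by (rule notE[rotated])
qed


theorem lemma4p6:
  fixes A :: "nat \<Rightarrow> real^2^2" and c :: real
  assumes "invertible (A 1)" and "invertible (A 2)" and "invertible (A 3)"
    and "c \<noteq> 0" and "A 3 = c *\<^sub>R mat 1"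
    and "irreducible_pair (A 1) (A 2)" and "dominated_pair (A 1) (A 2)"
  shows "\<forall>f. holder_potential f \<longrightarrow> (\<forall>C>0. \<exists>i\<in>Sigma3. \<exists>n::nat.
           \<bar>(\<Sum>k<n. f (shiftk k i)) - ln (opnorm (word_prod A i n))\<bar> > C)"
proof (intro allI impI)
  fix f :: "(nat \<Rightarrow> nat) \<Rightarrow> real" and C :: real
  assume hf: "holder_potential f" and Cp: "C > 0"
  show "\<exists>i\<in>Sigma3. \<exists>n::nat. \<bar>(\<Sum>k<n. f (shiftk k i)) - ln (opnorm (word_prod A i n))\<bar> > C"
  proof (rule ccontr)
    assume "\<not> (\<exists>i\<in>Sigma3. \<exists>n::nat. \<bar>(\<Sum>k<n. f (shiftk k i)) - ln (opnorm (word_prod A i n))\<bar> > C)"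
    then have H: "\<forall>i\<in>Sigma3. \<forall>n. \<bar>bs f i n - ln (opnorm (word_prod A i n))\<bar> \<le> C"
      by (auto simp: bs_def not_less)
    show False by (rule main_contra[OF assms(1,2,4,5,6,7) hf Cp H])
  qed
qed

end
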